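(* Let $0<p<1$ and let $\{a_n\}_{n\geq 0}$ be a sequence of non-negative real numbers such that $\left\{\frac{1}{n+1}a^x_n(p)\right\}_{n\geq 0}$ converges to a finite limit $a\in\mathbb{R}$, where $$a^x_n(p)=\sum_{i=0}^{\lfloor pn-\epsilon(n)\rfloor}w_n^i(p)\, a_i.$$ Then $\{a^*_n\}_{n\geq 0}$ converges to $a$.
   Context: $a^*_n=\frac{1}{n+1}\sum_{i=0}^n a_i$. For $0<p<1$, $n\in\mathbb{N}$ and $0\le i\le n$, $w_n^i(p)=\sum_{j=i}^n\binom{j}{i}p^i(1-p)^{j-i}$. $\epsilon(n)=\sqrt{n}\log n$ for $n\geq2$ and $\epsilon(n)=1$ otherwise; a sum whose upper index is negative is $0$. *)

theory Defs
  imports "HOL-Analysis.Analysis"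
begin

definition cesaro :: "(nat \<Rightarrow> real) \<Rightarrow> nat \<Rightarrow> real" where
  "cesaro a n = (\<Sum>i=0..n. a i) / real (n + 1)"

definition wgt :: "real \<Rightarrow> nat \<Rightarrow> nat \<Rightarrow> real" where
  "wgt p n i = (\<Sum>j=i..n. real (j choose i) * p ^ i * (1 - p) ^ (j - i))"

definition eps :: "nat \<Rightarrow> real" where
  "eps n = (if n \<ge> 2 then sqrt (real n) * ln (real n) else 1)"

definition ax :: "(nat \<Rightarrow> real) \<Rightarrow> real \<Rightarrow> nat \<Rightarrow> real" where
  "ax a p n = (\<Sum>i\<in>{i. int i \<le> \<lfloor>p * real n - eps n\<rfloor>}. wgt p n i * a i)"

end

theory Submission imports Defs "HOL-Probability.Hoeffding" "HOL-Real_Asymp.Real_Asymp" begin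

definition BB :: "real \<Rightarrow> nat \<Rightarrow> nat \<Rightarrow> real" where
  "BB p N k = real (N choose k) * p ^ k * (1 - p) ^ (N - k)"

lemma BB_nonneg: "0 \<le> p \<Longrightarrow> p \<le> 1 \<Longrightarrow> BB p N k \<ge> 0"
  by (simp add: BB_def)

lemma BB_pascal: "BB p (Suc N) (Suc i) = p * BB p N i + (1 - p) * BB p N (Suc i)"
proof (cases "i < N")
  case True
  then have e: "N - i = Suc (N - Suc i)" by simp
  show ?thesis unfolding BB_def using e by (simp add: algebra_simps)
next
  case False
  then have "N choose Suc i = 0" by simp
  moreover have "Suc N - Suc i = N - i" by simp
  ultimately show ?thesis unfolding BB_def by (simp add: algebra_simps)
qed

lemma F_step: "(\<Sum>k\<le>i. BB p (Suc N) k) = (\<Sum>k\<le>i. BB p N k) - p * BB p N i"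
proof (induction i)
  case 0
  then show ?case by (simp add: BB_def algebra_simps)
next
  case (Suc i)
  then show ?case using BB_pascal[of p N i] by (simp add: algebra_simps)
qed

lemma F_total: assumes "N \<le> i" shows "(\<Sum>k\<le>i. BB p N k) = 1"
proof -
  have "(\<Sum>k\<le>i. BB p N k) = (\<Sum>k\<le>N. BB p N k)"
    using assms by (intro sum.mono_neutral_right) (auto simp: BB_def)
  also have "\<dots> = (p + (1 - p)) ^ N" unfolding BB_def binomial_ring by simp
  finally show ?thesis by simp
qed

lemma wgt_Suc: "wgt p (Suc n) i = wgt p n i + real (Suc n choose i) * p ^ i * (1 - p) ^ (Suc n - i)"
  unfolding wgt_def by (simp add: sum.cl_ivl_Suc)

lemma wgt_F: "p * wgt p n i = 1 - (\<Sum>k\<le>i. BB p (Suc n) k)"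
proof (induction n)
  case 0
  show ?case
  proof (cases i)
    case 0 then show ?thesis by (simp add: wgt_def BB_def)
  next
    case (Suc j) then show ?thesis using F_total[where N=1 and i=i and p=p] by (simp add: wgt_def)
  qed
next
  case (Suc n)
  have "p * wgt p (Suc n) i = p * wgt p n i + p * BB p (Suc n) i"
    unfolding wgt_Suc BB_def by (simp add: algebra_simps)
  then show ?case using Suc F_step[where i=i and p=p and N="Suc n"] by simp
qed

lemma F_prob: assumes "0 \<le> p" "p \<le> 1"
  shows "(\<Sum>k\<le>i. BB p N k) = measure_pmf.prob (binomial_pmf N p) {x. real x \<le> real i}"
proof -
  have "{x. real x \<le> real i} = {..i}" by auto
  then show ?thesis using assms by (simp add: measure_measure_pmf_finite BB_def)
qed

lemma F_bound: assumes "0 \<le> p" "p \<le> 1" "real i \<le> real N * p - t" "t \<ge> 0" "N > 0"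
  shows "(\<Sum>k\<le>i. BB p N k) \<le> exp (-2 * t\<^sup>2 / N)"
proof -
  interpret binomial_distribution N p using assms by unfold_locales auto
  have "(\<Sum>k\<le>i. BB p N k) \<le> measure_pmf.prob (binomial_pmf N p) {x. real x \<le> real N * p - t}"
    unfolding F_prob[OF assms(1,2)] using assms(3)
    by (intro measure_pmf.finite_measure_mono) auto
  also have "\<dots> \<le> exp (-2 * t\<^sup>2 / N)" by (rule prob_le[OF assms(5,4)])
  finally show ?thesis .
qed

lemma ivt_nat: fixes g :: "nat \<Rightarrow> nat"
  assumes "\<And>n. n \<ge> N \<Longrightarrow> g (Suc n) \<le> Suc (g n)" "g N \<le> k" "n0 \<ge> N" "g n0 \<ge> k"
  shows "\<exists>n\<ge>N. g n = k"
  using assms(3,4)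
proof (induction n0 rule: dec_induct)
  case base then show ?case using assms(2) by auto
next
  case (step n)
  show ?case
  proof (cases "g n \<ge> k")
    case True then show ?thesis using step by auto
  next
    case False then show ?thesis using step assms(1)[of n] by (intro exI[of _ "Suc n"]) auto
  qed
qed

theorem lemma10:
  fixes a :: "nat \<Rightarrow> real" and p L :: real
  assumes "0 < p" "p < 1"
    and "\<And>n. a n \<ge> 0"
    and "(\<lambda>n. ax a p n / real (n + 1)) \<longlonglongrightarrow> L"
  shows "cesaro a \<longlonglongrightarrow> L"
proof -
  note p0 = assms(1) and p1 = assms(2) and anon = assms(3)
  define r where "r n = p * real n - eps n" for n
  define m where "m n = nat \<lfloor>r n\<rfloor>" for n
  define S where "S k = (\<Sum>i=0..k. a i)" for k
  define X where "X n = ax a p n / real (n+1)" for n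
  define F where "F n i = (\<Sum>k\<le>i. BB p (Suc n) k)" for n i
  define \<delta> where "\<delta> n = F n (m n)" for n
  define s where "s n = S (m n) / real (n+1)" for n
  define c where "c n = S (m n) / real (m n + 1)" for n
  have XL: "X \<longlonglongrightarrow> L" using assms(4) unfolding X_def .
  have eps_nonneg: "eps n \<ge> 0" for n unfolding eps_def by auto
  have S_nonneg: "S k \<ge> 0" for k unfolding S_def using anon by (simp add: sum_nonneg)
  have F_nonneg: "F n i \<ge> 0" for n i unfolding F_def using p0 p1 by (intro sum_nonneg BB_nonneg) auto
  have F_mono: "F n i \<le> F n j" if "i \<le> j" for n i j
    unfolding F_def using that p0 p1 by (intro sum_mono2) (auto intro: BB_nonneg)
  have eps_lim: "(\<lambda>n. eps n / real (n+1)) \<longlonglongrightarrow> 0"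
  proof -
    have "(\<lambda>n::nat. sqrt (real n) * ln (real n) / real (n+1)) \<longlonglongrightarrow> 0" by real_asymp
    moreover have "eventually (\<lambda>n. sqrt (real n) * ln (real n) / real (n+1) = eps n / real (n+1)) sequentially"
      using eventually_ge_at_top[of "2::nat"] by eventually_elim (simp add: eps_def)
    ultimately show ?thesis by (rule Lim_transform_eventually)
  qed
  have r_lim: "(\<lambda>n. r n / real (n+1)) \<longlonglongrightarrow> p"
  proof -
    have "(\<lambda>n. p * (real n / real (Suc n)) - eps n / real (n+1)) \<longlonglongrightarrow> p * 1 - 0"
      by (intro tendsto_intros eps_lim LIMSEQ_n_over_Suc_n)
    then show ?thesis by (simp add: r_def diff_divide_distrib)
  qed
  have ev_r: "eventually (\<lambda>n. r n \<ge> 0) sequentially"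
  proof -
    have "eventually (\<lambda>n. r n / real (n+1) > 0) sequentially"
      using order_tendstoD(1)[OF r_lim p0] .
    then show ?thesis by eventually_elim (simp add: zero_less_divide_iff)
  qed
  have m_real: "real (m n) \<le> r n \<and> r n - 1 < real (m n)" if "r n \<ge> 0" for n
  proof -
    have "real (m n) = real_of_int \<lfloor>r n\<rfloor>" unfolding m_def using that by simp
    then show ?thesis by linarith
  qed
  have m_lim: "(\<lambda>n. real (m n) / real (n+1)) \<longlonglongrightarrow> p"
  proof (rule tendsto_sandwich)
    show "eventually (\<lambda>n. (r n - 1) / real (n+1) \<le> real (m n) / real (n+1)) sequentially"
      using ev_r by eventually_elim (metis m_real divide_right_mono less_imp_le of_nat_0_le_iff)
    show "eventually (\<lambda>n. real (m n) / real (n+1) \<le> r n / real (n+1)) sequentially"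
      using ev_r by eventually_elim (metis m_real divide_right_mono less_imp_le of_nat_0_le_iff)
    show "(\<lambda>n. r n / real (n+1)) \<longlonglongrightarrow> p" by (rule r_lim)
    have "(\<lambda>n. r n / real (n+1) - 1 / real (Suc n)) \<longlonglongrightarrow> p - 0"
      by (intro tendsto_intros r_lim LIMSEQ_inverse_real_of_nat[unfolded inverse_eq_divide])
    then show "(\<lambda>n. (r n - 1) / real (n+1)) \<longlonglongrightarrow> p" by (simp add: diff_divide_distrib)
  qed
  have \<delta>_bound: "\<delta> n \<le> exp (-2 * (eps n)\<^sup>2 / real (Suc n))" if "r n \<ge> 0" for n
  proof -
    have "real (m n) \<le> real (Suc n) * p - eps n" using m_real[OF that] p0 unfolding r_def
      by (simp add: algebra_simps)
    then show ?thesis unfolding \<delta>_def F_def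
      using F_bound[of p "m n" "Suc n" "eps n"] p0 p1 eps_nonneg by simp
  qed
  have \<delta>_lim: "\<delta> \<longlonglongrightarrow> 0"
  proof (rule tendsto_sandwich)
    show "eventually (\<lambda>n. 0 \<le> \<delta> n) sequentially" unfolding \<delta>_def using F_nonneg by simp
    show "eventually (\<lambda>n. \<delta> n \<le> exp (-2 * (eps n)\<^sup>2 / real (Suc n))) sequentially"
      using ev_r by eventually_elim (rule \<delta>_bound)
    show "(\<lambda>n. 0::real) \<longlonglongrightarrow> 0" by simp
    have "(\<lambda>n::nat. exp (-2 * (sqrt (real n) * ln (real n))\<^sup>2 / real (Suc n))) \<longlonglongrightarrow> 0" by real_asymp
    moreover have "eventually (\<lambda>n. exp (-2 * (sqrt (real n) * ln (real n))\<^sup>2 / real (Suc n))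
        = exp (-2 * (eps n)\<^sup>2 / real (Suc n))) sequentially"
      using eventually_ge_at_top[of "2::nat"] by eventually_elim (simp add: eps_def)
    ultimately show "(\<lambda>n. exp (-2 * (eps n)\<^sup>2 / real (Suc n))) \<longlonglongrightarrow> 0" by (rule Lim_transform_eventually)
  qed
  have ax_eq: "ax a p n = (\<Sum>i=0..m n. wgt p n i * a i)" if "r n \<ge> 0" for n
  proof -
    have "{i. int i \<le> \<lfloor>p * real n - eps n\<rfloor>} = {0..m n}"
    proof -
      have f: "0 \<le> \<lfloor>p * real n - eps n\<rfloor>" using that unfolding r_def by simp
      show ?thesis using f unfolding m_def r_def by (auto simp: le_nat_iff)
    qed
    then show ?thesis unfolding ax_def by simp
  qed
  have bounds: "(1 - \<delta> n) * S (m n) \<le> p * ax a p n \<and> p * ax a p n \<le> S (m n)" if "r n \<ge> 0" for n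
  proof -
    have e: "p * ax a p n = (\<Sum>i=0..m n. (1 - F n i) * a i)"
      unfolding ax_eq[OF that] sum_distrib_left F_def
      by (intro sum.cong refl) (simp add: wgt_F mult.assoc[symmetric])
    have "(1 - \<delta> n) * S (m n) = (\<Sum>i=0..m n. (1 - \<delta> n) * a i)" unfolding S_def sum_distrib_left ..
    also have "\<dots> \<le> (\<Sum>i=0..m n. (1 - F n i) * a i)"
      using F_mono anon unfolding \<delta>_def by (intro sum_mono mult_right_mono) auto
    finally have 1: "(1 - \<delta> n) * S (m n) \<le> p * ax a p n" using e by simp
    have "(\<Sum>i=0..m n. (1 - F n i) * a i) \<le> (\<Sum>i=0..m n. a i)"
      by (intro sum_mono) (simp add: algebra_simps F_nonneg anon mult_nonneg_nonneg)
    then have 2: "p * ax a p n \<le> S (m n)" using e unfolding S_def by simp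
    show ?thesis using 1 2 by simp
  qed
  have sX: "(\<lambda>n. s n - p * X n) \<longlonglongrightarrow> 0"
  proof (rule tendsto_sandwich)
    have ev_d: "eventually (\<lambda>n. \<delta> n < 1/2) sequentially" using order_tendstoD(2)[OF \<delta>_lim, of "1/2"] by simp
    show "eventually (\<lambda>n. 0 \<le> s n - p * X n) sequentially"
      using ev_r proof eventually_elim
      case (elim n)
      have "p * ax a p n / real (n+1) \<le> S (m n) / real (n+1)"
        using bounds[OF elim] by (intro divide_right_mono) auto
      then show ?case unfolding s_def X_def by simp
    qed
    show "eventually (\<lambda>n. s n - p * X n \<le> 2 * p * (\<delta> n * X n)) sequentially"
      using ev_r ev_d proof eventually_elim
      case (elim n)
      have b: "(1 - \<delta> n) * S (m n) \<le> p * ax a p n" using bounds[OF elim(1)] by simp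
      have d0: "\<delta> n \<ge> 0" unfolding \<delta>_def using F_nonneg by simp
      have "(1/2) * S (m n) \<le> (1 - \<delta> n) * S (m n)"
        by (rule mult_right_mono) (use elim(2) S_nonneg[of "m n"] in auto)
      then have h: "S (m n) \<le> 2 * (p * ax a p n)" using b by linarith
      have "\<delta> n * S (m n) \<le> \<delta> n * (2 * (p * ax a p n))"
        by (rule mult_left_mono[OF h d0])
      then have "S (m n) - p * ax a p n \<le> \<delta> n * (2 * (p * ax a p n))"
        using b by (simp add: algebra_simps)
      then have "(S (m n) - p * ax a p n) / real (n+1) \<le> \<delta> n * (2 * (p * ax a p n)) / real (n+1)"
        by (intro divide_right_mono) auto
      then show ?case unfolding s_def X_def by (simp add: diff_divide_distrib algebra_simps)
    qed
    show "(\<lambda>n. 0::real) \<longlonglongrightarrow> 0" by simp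
    have "(\<lambda>n. 2 * p * (\<delta> n * X n)) \<longlonglongrightarrow> 2 * p * (0 * L)"
      by (intro tendsto_intros \<delta>_lim XL)
    then show "(\<lambda>n. 2 * p * (\<delta> n * X n)) \<longlonglongrightarrow> 0" by simp
  qed
  have s_lim: "s \<longlonglongrightarrow> p * L"
  proof -
    have "(\<lambda>n. (s n - p * X n) + p * X n) \<longlonglongrightarrow> 0 + p * L"
      by (intro tendsto_intros sX XL)
    then show ?thesis by simp
  qed
  have c_lim: "c \<longlonglongrightarrow> L"
  proof -
    have d: "(\<lambda>n. real (m n) / real (n+1) + 1 / real (Suc n)) \<longlonglongrightarrow> p + 0"
      by (intro tendsto_intros m_lim LIMSEQ_inverse_real_of_nat[unfolded inverse_eq_divide])
    have "(\<lambda>n. s n / (real (m n) / real (n+1) + 1 / real (Suc n))) \<longlonglongrightarrow> p * L / (p + 0)"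
      by (intro tendsto_divide s_lim d) (use p0 in simp)
    moreover have "s n / (real (m n) / real (n+1) + 1 / real (Suc n)) = c n" for n
    proof -
      have e: "real (m n) / real (n+1) + 1 / real (Suc n) = real (m n + 1) / real (n+1)"
        by (simp add: add_divide_distrib)
      have "S (m n) / real (n + 1) / (real (m n + 1) / real (n + 1)) = S (m n) / real (m n + 1)"
        by (simp del: of_nat_add of_nat_Suc)
      then show ?thesis unfolding s_def c_def e .
    qed
    ultimately show ?thesis using p0 by simp
  qed
  have m_inf: "filterlim (\<lambda>n. real (m n)) at_top sequentially"
  proof -
    have "filterlim (\<lambda>n. real (m n) / real (n+1) * real (n+1)) at_top sequentially"
      by (rule filterlim_tendsto_pos_mult_at_top[OF m_lim p0]) real_asymp
    then show ?thesis by simp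
  qed
  have eps_mono: "eps n \<le> eps (Suc n)" if "n \<ge> 2" for n
    using that unfolding eps_def by (auto intro!: mult_mono)
  have m_step: "m (Suc n) \<le> Suc (m n)" if "n \<ge> 2" for n
  proof -
    have "r (Suc n) \<le> r n + 1" using eps_mono[OF that] p1 unfolding r_def by (simp add: algebra_simps)
    then have "\<lfloor>r (Suc n)\<rfloor> \<le> \<lfloor>r n\<rfloor> + 1" by linarith
    then show ?thesis unfolding m_def by linarith
  qed
  have c_ces: "cesaro a (m n) = c n" for n unfolding cesaro_def c_def S_def by simp
  show ?thesis
  proof (rule LIMSEQ_I)
    fix e :: real assume e: "0 < e"
    obtain N0 where N0: "\<And>n. n \<ge> N0 \<Longrightarrow> norm (c n - L) < e" using LIMSEQ_D[OF c_lim e] by blast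
    define N where "N = max N0 2"
    show "\<exists>no. \<forall>k\<ge>no. norm (cesaro a k - L) < e"
    proof (intro exI allI impI)
      fix k assume k: "k \<ge> m N"
      have "eventually (\<lambda>n. real (m n) \<ge> real k) sequentially"
        using m_inf unfolding filterlim_at_top by blast
      then obtain N' where N': "\<And>n. n \<ge> N' \<Longrightarrow> real (m n) \<ge> real k"
        unfolding eventually_sequentially by blast
      have "\<exists>n\<ge>N. m n = k"
        by (rule ivt_nat[of N m k "max N N'"]) (use m_step N_def k N' in auto)
      then obtain n where n: "n \<ge> N" "m n = k" by blast
      show "norm (cesaro a k - L) < e" using N0[of n] n c_ces[of n] N_def by simp
    qed
  qed
qed

end
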